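(* Let $J:[0,1]\to\mathbb{R}$ be continuous with $J(0)=J(1)=0$, twice differentiable on $(0,1)$ with $J''(p)<0$ for all $p\in(0,1)$. For $p_0,a\in(0,1)$ define the Bayes risk error divergence $$d(p_0\|a)=-J(p_0)+J(a)+(p_0-a)J'(a).$$ Fix a cell $[b_{k-1},b_k]$ with $0\le b_{k-1}<b_k\le 1$. Then the problem $$\min_{a\in(b_{k-1},b_k)}\ \max_{p_0\in[b_{k-1},b_k]} d(p_0\|a)$$ is solved by the (unique) point $a_k\in(b_{k-1},b_k)$ satisfying $$J'(a_k)=\frac{J(b_k)-J(b_{k-1})}{b_k-b_{k-1}}.$$
   Context: In binary hypothesis testing with prior $p_0=\Pr[H=h_0]$, costs $c_{10},c_{01}>0$ and deterministic likelihood ratio test decision rules, $J(p_0)=c_{10}p_0p_E^{\mathrm{I}}(p_0)+c_{01}(1-p_0)p_E^{\mathrm{II}}(p_0)$ is the Bayes risk, which is zero at $p_0\in\{0,1\}$, positive, continuous and strictly concave on $(0,1)$. A decision weight $a$ is the prior value used in the likelihood ratio test threshold; the mismatched Bayes risk is $J(p_0,a)=J(a)+(p_0-a)J'(a)$, and $d(p_0\|a)=J(p_0,a)-J(p_0)$. For the theorem only the stated analytic properties of $J$ are used. *)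

theory Defs
  imports "HOL-Analysis.Analysis"
begin

definition bayes_div :: "(real \<Rightarrow> real) \<Rightarrow> (real \<Rightarrow> real) \<Rightarrow> real \<Rightarrow> real \<Rightarrow> real" where
  "bayes_div J J' p0 a = - J p0 + J a + (p0 - a) * J' a"

definition max_div :: "(real \<Rightarrow> real) \<Rightarrow> (real \<Rightarrow> real) \<Rightarrow> real \<Rightarrow> real \<Rightarrow> real \<Rightarrow> real" where
  "max_div J J' l u a = (SUP p0\<in>{l..u}. bayes_div J J' p0 a)"

end

theory Submission
  imports Defs
begin

lemma mvtJ:
  fixes J J' :: "real \<Rightarrow> real"
  assumes cont: "continuous_on {0..1} J"
    and d1: "\<And>p. p \<in> {0<..<1} \<Longrightarrow> (J has_real_derivative J' p) (at p)"
    and xy: "0 \<le> x" "x < y" "y \<le> 1"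
  shows "\<exists>z. x < z \<and> z < y \<and> J y - J x = (y - x) * J' z"
proof -
  have c: "continuous_on {x..y} J"
    using cont by (rule continuous_on_subset) (use xy in auto)
  have "\<And>t. x < t \<Longrightarrow> t < y \<Longrightarrow> J differentiable (at t)"
  proof -
    fix t assume "x < t" "t < y"
    hence "t \<in> {0<..<1}" using xy by auto
    from d1[OF this] show "J differentiable (at t)" unfolding real_differentiable_def by blast
  qed
  from MVT[OF xy(2) c this] obtain l z where
    z: "x < z" "z < y" "DERIV J z :> l" "J y - J x = (y - x) * l" by blast
  have "DERIV J z :> J' z" using d1 z xy by auto
  with z(3) have "l = J' z" by (rule DERIV_unique)
  with z show ?thesis by blast
qed

lemma J'_strict:
  fixes J' J'' :: "real \<Rightarrow> real"
  assumes d2: "\<And>p. p \<in> {0<..<1} \<Longrightarrow> (J' has_real_derivative J'' p) (at p)"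
    and neg: "\<And>p. p \<in> {0<..<1} \<Longrightarrow> J'' p < 0"
    and xy: "0 < x" "x < y" "y < 1"
  shows "J' y < J' x"
proof -
  have "\<And>t. x \<le> t \<Longrightarrow> t \<le> y \<Longrightarrow> DERIV J' t :> J'' t" using d2 xy by auto
  from MVT2[OF xy(2) this] obtain z where
    z: "x < z" "z < y" "J' y - J' x = (y - x) * J'' z" by blast
  have "J'' z < 0" using neg z xy by auto
  hence "(y - x) * J'' z < 0" using xy by (simp add: mult_pos_neg)
  with z show ?thesis by linarith
qed

theorem theorem1:
  fixes J J' J'' :: "real \<Rightarrow> real" and b0 b1 :: real
  assumes cont: "continuous_on {0..1} J"
    and J0: "J 0 = 0" and J1: "J 1 = 0"
    and d1: "\<And>p. p \<in> {0<..<1} \<Longrightarrow> (J has_real_derivative J' p) (at p)"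
    and d2: "\<And>p. p \<in> {0<..<1} \<Longrightarrow> (J' has_real_derivative J'' p) (at p)"
    and neg: "\<And>p. p \<in> {0<..<1} \<Longrightarrow> J'' p < 0"
    and cell: "0 \<le> b0" "b0 < b1" "b1 \<le> 1"
  shows "(\<exists>!ak. ak \<in> {b0<..<b1} \<and> J' ak = (J b1 - J b0) / (b1 - b0))
    \<and> (\<forall>ak. ak \<in> {b0<..<b1} \<and> J' ak = (J b1 - J b0) / (b1 - b0) \<longrightarrow>
          (\<forall>a\<in>{b0<..<b1}. max_div J J' b0 b1 ak \<le> max_div J J' b0 b1 a))"
proof -
  have mv: "\<exists>z. x < z \<and> z < y \<and> J y - J x = (y - x) * J' z"
    if "0 \<le> x" "x < y" "y \<le> 1" for x y
    using mvtJ[of J J' x y] cont d1 that by blast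
  have dec: "J' y < J' x" if "b0 < x" "x < y" "y < b1" for x y
    using J'_strict[OF d2 neg, of x y] that cell by auto
  define c where "c = (J b1 - J b0) / (b1 - b0)"
  have ex: "\<exists>ak. ak \<in> {b0<..<b1} \<and> J' ak = c"
  proof -
    obtain z where "b0 < z" "z < b1" "J b1 - J b0 = (b1 - b0) * J' z"
      using mv[OF cell] by blast
    thus ?thesis using cell unfolding c_def by auto
  qed
  have uniq: "x = y" if "x \<in> {b0<..<b1}" "J' x = c" "y \<in> {b0<..<b1}" "J' y = c" for x y
  proof (rule ccontr)
    assume "x \<noteq> y"
    then consider "x < y" | "y < x" by linarith
    thus False
    proof cases
      case 1 thus False using dec[of x y] that by simp
    next
      case 2 thus False using dec[of y x] that by simp
    qed
  qed
  have md: "max_div J J' b0 b1 a = max (bayes_div J J' b0 a) (bayes_div J J' b1 a)"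
    if a: "a \<in> {b0<..<b1}" for a
  proof -
    have le: "bayes_div J J' p a \<le> max (bayes_div J J' b0 a) (bayes_div J J' b1 a)"
      if p: "p \<in> {b0..b1}" for p
    proof (cases "p = b0 \<or> p = b1")
      case True thus ?thesis by auto
    next
      case False
      with p have p': "b0 < p" "p < b1" by auto
      obtain z1 where z1: "b0 < z1" "z1 < p" "J p - J b0 = (p - b0) * J' z1"
        using mv[of b0 p] p' cell by auto
      obtain z2 where z2: "p < z2" "z2 < b1" "J b1 - J p = (b1 - p) * J' z2"
        using mv[of p b1] p' cell by auto
      have "J' z2 < J' z1" using dec z1 z2 by auto
      have e1: "bayes_div J J' p a - bayes_div J J' b0 a = (p - b0) * (J' a - J' z1)"
        using z1 unfolding bayes_div_def by (simp add: algebra_simps)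
      have e2: "bayes_div J J' b1 a - bayes_div J J' p a = (b1 - p) * (J' a - J' z2)"
        using z2 unfolding bayes_div_def by (simp add: algebra_simps)
      show ?thesis
      proof (cases "J' a - J' z1 \<le> 0")
        case True
        hence "(p - b0) * (J' a - J' z1) \<le> 0" using p' by (simp add: mult_nonneg_nonpos)
        thus ?thesis using e1 by linarith
      next
        case False
        hence "J' a - J' z2 > 0" using \<open>J' z2 < J' z1\<close> by linarith
        hence "(b1 - p) * (J' a - J' z2) > 0" using p' by simp
        thus ?thesis using e2 by linarith
      qed
    qed
    show ?thesis unfolding max_div_def
    proof (rule cSup_eq_maximum)
      show "max (bayes_div J J' b0 a) (bayes_div J J' b1 a) \<in> (\<lambda>p0. bayes_div J J' p0 a) ` {b0..b1}"
        using cell by (cases "bayes_div J J' b0 a \<le> bayes_div J J' b1 a") (auto simp: max_def)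
    next
      fix x assume "x \<in> (\<lambda>p0. bayes_div J J' p0 a) ` {b0..b1}"
      thus "x \<le> max (bayes_div J J' b0 a) (bayes_div J J' b1 a)" using le by auto
    qed
  qed
  have main: "max_div J J' b0 b1 ak \<le> max_div J J' b0 b1 a"
    if ak: "ak \<in> {b0<..<b1}" "J' ak = c" and a: "a \<in> {b0<..<b1}" for ak a
  proof -
    define lam where "lam = (b1 - ak) / (b1 - b0)"
    have lam: "0 \<le> lam" "lam \<le> 1" using ak cell unfolding lam_def by auto
    have l1: "lam * (b1 - b0) = b1 - ak" using cell unfolding lam_def by simp
    have "lam * b0 + (1 - lam) * b1 = b1 - lam * (b1 - b0)" by (simp add: algebra_simps)
    with l1 have lamak: "lam * b0 + (1 - lam) * b1 = ak" by simp
    have tan: "J ak \<le> J a + (ak - a) * J' a"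
    proof -
      consider "a < ak" | "a = ak" | "ak < a" by linarith
      thus ?thesis
      proof cases
        case 1
        then obtain z where "a < z" "z < ak" "J ak - J a = (ak - a) * J' z"
          using mv[of a ak] a ak cell by auto
        moreover have "J' z < J' a" using dec \<open>a < z\<close> \<open>z < ak\<close> a ak by auto
        ultimately show ?thesis using 1
          by (smt (verit, best) mult_left_mono)
      next
        case 2 thus ?thesis by simp
      next
        case 3
        then obtain z where "ak < z" "z < a" "J a - J ak = (a - ak) * J' z"
          using mv[of ak a] a ak cell by auto
        moreover have "J' a < J' z" using dec \<open>ak < z\<close> \<open>z < a\<close> a ak by auto
        moreover have "(a - ak) * J' a \<le> (a - ak) * J' z"
          using 3 \<open>J' a < J' z\<close> by (intro mult_left_mono) auto
        ultimately show ?thesis by (simp add: algebra_simps)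
      qed
    qed
    have eqak: "bayes_div J J' b0 ak = bayes_div J J' b1 ak"
    proof -
      have "(b1 - b0) * c = J b1 - J b0" using cell unfolding c_def by simp
      thus ?thesis using ak unfolding bayes_div_def by (simp add: algebra_simps)
    qed
    have avg: "lam * bayes_div J J' b0 a + (1 - lam) * bayes_div J J' b1 a
        = - (lam * J b0 + (1 - lam) * J b1) + J a + (ak - a) * J' a"
      unfolding bayes_div_def lamak[symmetric] by (simp add: algebra_simps)
    have avgk: "lam * bayes_div J J' b0 ak + (1 - lam) * bayes_div J J' b1 ak
        = - (lam * J b0 + (1 - lam) * J b1) + J ak"
      unfolding bayes_div_def lamak[symmetric] by (simp add: algebra_simps)
    have "lam * bayes_div J J' b0 a + (1 - lam) * bayes_div J J' b1 a
        \<le> max (bayes_div J J' b0 a) (bayes_div J J' b1 a)"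
    proof -
      let ?M = "max (bayes_div J J' b0 a) (bayes_div J J' b1 a)"
      have "lam * bayes_div J J' b0 a \<le> lam * ?M" using lam by (simp add: mult_left_mono)
      moreover have "(1 - lam) * bayes_div J J' b1 a \<le> (1 - lam) * ?M"
        using lam by (simp add: mult_left_mono)
      ultimately show ?thesis by (simp add: algebra_simps)
    qed
    moreover have "lam * bayes_div J J' b0 ak + (1 - lam) * bayes_div J J' b1 ak
        = max (bayes_div J J' b0 ak) (bayes_div J J' b1 ak)"
      using eqak by (simp add: algebra_simps)
    ultimately show ?thesis using md[OF a] md[OF ak(1)] avg avgk tan by linarith
  qed
  have "\<exists>!ak. ak \<in> {b0<..<b1} \<and> J' ak = c"
  proof -
    from ex obtain ak where "ak \<in> {b0<..<b1} \<and> J' ak = c" by blast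
    thus ?thesis using uniq by (intro ex1I[of _ ak]) auto
  qed
  moreover have "\<forall>ak. ak \<in> {b0<..<b1} \<and> J' ak = c \<longrightarrow>
          (\<forall>a\<in>{b0<..<b1}. max_div J J' b0 b1 ak \<le> max_div J J' b0 b1 a)"
    using main by blast
  ultimately show ?thesis unfolding c_def by blast
qed

end
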